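(* Consider $\dot x=f(x,p)$ with $x\in\mathcal{D}\subset\mathbb{R}^n$, $p\in\mathcal{P}\subset\mathbb{R}^m$, satisfying assumptions A1–A4 below. Then for all $p_1,p_2\in\mathcal{P}$ with $p_1\succeq p_2$, $$\mathcal{B}(x^\ast(p_1))\subseteq\mathcal{B}(x^\ast(p_2)),\qquad \mathcal{B}(x^\bullet(p_1))\supseteq\mathcal{B}(x^\bullet(p_2)).$$ In particular, for all $p\in\mathcal{P}$, $$\mathcal{B}(x^\ast(p_{\min}))\subseteq\mathcal{B}(x^\ast(p))\subseteq\mathcal{B}(x^\ast(p_{\max})),\qquad \mathcal{B}(x^\bullet(p_{\min}))\supseteq\mathcal{B}(x^\bullet(p))\supseteq\mathcal{B}(x^\bullet(p_{\max})).$$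
   Context: The orders are standard: $x\succeq y$ iff $x-y\in\mathbb{R}^n_{\ge0}$ (similarly in $\mathbb{R}^m$), $x\gg y$ iff all components of $x-y$ are positive. $f$ is continuous in $(x,p)$ and locally Lipschitz in $x$; $\phi(t,x_0,p)$ denotes the solution with initial state $x_0$ and parameter $p$. $\mathcal{B}(x^\ast(p))$ denotes the basin of attraction of the equilibrium $x^\ast(p)$ for the system with parameter $p$ (the set of initial conditions in $\mathcal{D}$ whose solutions converge to it). The system is monotone in $x$ and $p$ if $\phi(t,x,p)\preceq\phi(t,y,q)$ for all $t\ge0$, all $x\preceq y$ in $\mathcal{D}$ and all $p\preceq q$ in $\mathcal{P}$. Bistability on $\mathcal{D}$ for a given $p$ means: $\mathcal{D}$ is forward invariant, the system has exactly two asymptotically stable equilibria $x^\ast(p),x^\bullet(p)$ in $\mathcal{D}$, solutions starting in $\mathcal{D}$ that do not converge to one of them start in the common boundary of the two basins, and $\mathrm{cl}(\mathcal{B}(x^\bullet(p)))=\mathrm{cl}(\mathcal{D}\setminus\mathcal{B}(x^\ast(p)))$. Assumptions: (A1) for every $p\in\mathcal{P}$ the system is bistable on $\mathcal{D}$ with stable equilibria $x^\ast(p)$, $x^\bullet(p)$, and the system is monotone in $x$ and $p$. (A2) $\mathcal{P}$ is compact and contains $p_{\min},p_{\max}$ with $p_{\min}\preceq p\preceq p_{\max}$ for all $p\in\mathcal{P}$. (A3) for all $p\in\mathcal{P}$: $x^\ast(p)\in\bigcap_{q\in\mathcal{P}}\mathcal{B}(x^\ast(q))$ and $x^\bullet(p)\in\bigcap_{q\in\mathcal{P}}\mathcal{B}(x^\bullet(q))$.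 (A4) $x^\bullet(p_{\min})\gg x^\ast(p_{\max})$. *)

theory Defs
  imports "HOL-Analysis.Analysis"
begin

text \<open>The order x \<preceq> y is the componentwise order \<le> on vec (library).\<close>

definition strongly_less :: "real^'n \<Rightarrow> real^'n \<Rightarrow> bool" where
  "strongly_less x y \<longleftrightarrow> (\<forall>i. x $ i < y $ i)"

definition is_flow ::
  "(real^'n \<Rightarrow> real^'m \<Rightarrow> real^'n) \<Rightarrow> (real \<Rightarrow> real^'n \<Rightarrow> real^'m \<Rightarrow> real^'n)
   \<Rightarrow> (real^'n) set \<Rightarrow> (real^'m) set \<Rightarrow> bool" where
  "is_flow f phi D P \<longleftrightarrow>
     (\<forall>x0\<in>D. \<forall>p\<in>P. phi 0 x0 p = x0 \<and>
        (\<forall>t\<ge>0. ((\<lambda>s. phi s x0 p) has_vector_derivative f (phi t x0 p) p) (at t within {0..})))"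

definition basin ::
  "(real \<Rightarrow> real^'n \<Rightarrow> real^'m \<Rightarrow> real^'n) \<Rightarrow> (real^'n) set \<Rightarrow> real^'m \<Rightarrow> real^'n \<Rightarrow> (real^'n) set" where
  "basin phi D p xe = {x0 \<in> D. ((\<lambda>t. phi t x0 p) \<longlongrightarrow> xe) at_top}"

definition equilibrium :: "(real^'n \<Rightarrow> real^'m \<Rightarrow> real^'n) \<Rightarrow> real^'m \<Rightarrow> real^'n \<Rightarrow> bool" where
  "equilibrium f p xe \<longleftrightarrow> f xe p = 0"

definition asymp_stable ::
  "(real^'n \<Rightarrow> real^'m \<Rightarrow> real^'n) \<Rightarrow> (real \<Rightarrow> real^'n \<Rightarrow> real^'m \<Rightarrow> real^'n)
   \<Rightarrow> (real^'n) set \<Rightarrow> real^'m \<Rightarrow> real^'n \<Rightarrow> bool" where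
  "asymp_stable f phi D p xe \<longleftrightarrow>
     equilibrium f p xe \<and>
     (\<forall>e>0. \<exists>d>0. \<forall>x0\<in>D. dist x0 xe < d \<longrightarrow> (\<forall>t\<ge>0. dist (phi t x0 p) xe < e)) \<and>
     (\<exists>d>0. \<forall>x0\<in>D. dist x0 xe < d \<longrightarrow> ((\<lambda>t. phi t x0 p) \<longlongrightarrow> xe) at_top)"

definition forward_invariant ::
  "(real \<Rightarrow> real^'n \<Rightarrow> real^'m \<Rightarrow> real^'n) \<Rightarrow> (real^'n) set \<Rightarrow> real^'m \<Rightarrow> bool" where
  "forward_invariant phi D p \<longleftrightarrow> (\<forall>x0\<in>D. \<forall>t\<ge>0. phi t x0 p \<in> D)"

definition bistable ::
  "(real^'n \<Rightarrow> real^'m \<Rightarrow> real^'n) \<Rightarrow> (real \<Rightarrow> real^'n \<Rightarrow> real^'m \<Rightarrow> real^'n)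
   \<Rightarrow> (real^'n) set \<Rightarrow> real^'m \<Rightarrow> real^'n \<Rightarrow> real^'n \<Rightarrow> bool" where
  "bistable f phi D p xs xb \<longleftrightarrow>
     forward_invariant phi D p \<and>
     xs \<noteq> xb \<and>
     {xe \<in> D. asymp_stable f phi D p xe} = {xs, xb} \<and>
     (\<forall>x0\<in>D. x0 \<notin> basin phi D p xs \<and> x0 \<notin> basin phi D p xb \<longrightarrow>
        x0 \<in> frontier (basin phi D p xs) \<inter> frontier (basin phi D p xb)) \<and>
     closure (basin phi D p xb) = closure (D - basin phi D p xs)"

definition monotone_system ::
  "(real \<Rightarrow> real^'n \<Rightarrow> real^'m \<Rightarrow> real^'n) \<Rightarrow> (real^'n) set \<Rightarrow> (real^'m) set \<Rightarrow> bool" where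
  "monotone_system phi D P \<longleftrightarrow>
     (\<forall>t\<ge>0. \<forall>x\<in>D. \<forall>y\<in>D. \<forall>p\<in>P. \<forall>q\<in>P. x \<le> y \<and> p \<le> q \<longrightarrow> phi t x p \<le> phi t y q)"

end

theory Submission
  imports Defs
begin

lemma deriv_sq:
  fixes a :: "real \<Rightarrow> 'a::euclidean_space"
  assumes "(a has_vector_derivative a') (at s)"
  shows "((\<lambda>t. a t \<bullet> a t) has_real_derivative 2 * (a s \<bullet> a')) (at s)"
proof -
  have "((\<lambda>t. a t \<bullet> a t) has_derivative (\<lambda>h. a s \<bullet> (h *\<^sub>R a') + (h *\<^sub>R a') \<bullet> a s)) (at s)"
    using assms unfolding has_vector_derivative_def
    by (intro has_derivative_inner) 
  moreover have "(\<lambda>h. a s \<bullet> (h *\<^sub>R a') + (h *\<^sub>R a') \<bullet> a s) = (\<lambda>h. h * (2 * (a s \<bullet> a')))"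
    by (auto simp: inner_commute algebra_simps)
  ultimately show ?thesis by (simp add: has_field_derivative_def mult_commute_abs)
qed

lemma gronwall_like:
  fixes u v :: "real \<Rightarrow> 'a::euclidean_space"
  assumes du: "\<And>t. t \<ge> 0 \<Longrightarrow> (u has_vector_derivative F (u t)) (at t within {0..})"
    and dv: "\<And>t. t \<ge> 0 \<Longrightarrow> (v has_vector_derivative F (v t)) (at t within {0..})"
    and lip: "\<And>t. 0 \<le> t \<Longrightarrow> t \<le> T \<Longrightarrow> dist (u t) (v t) \<le> r \<Longrightarrow>
               dist (F (u t)) (F (v t)) \<le> L * dist (u t) (v t)"
    and L: "0 \<le> L" and T: "0 \<le> T"
    and small: "dist (u 0) (v 0) * exp (L * T) < r"
  shows "\<forall>t\<in>{0..T}. dist (u t) (v t) \<le> dist (u 0) (v 0) * exp (L * t)"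
proof -
  define w where "w t = (u t - v t) \<bullet> (u t - v t)" for t
  define h where "h t = exp (-(2*L)*t) * w t" for t
  have wd: "w t = (dist (u t) (v t))\<^sup>2" for t
    by (simp add: w_def dist_norm power2_norm_eq_inner)
  have cu: "continuous_on {0..} u"
    unfolding continuous_on_eq_continuous_within
    using du by (auto intro: has_vector_derivative_continuous)
  have cv: "continuous_on {0..} v"
    unfolding continuous_on_eq_continuous_within
    using dv by (auto intro: has_vector_derivative_continuous)
  have cuT: "continuous_on {0..T} u" using cu by (rule continuous_on_subset) auto
  have cvT: "continuous_on {0..T} v" using cv by (rule continuous_on_subset) auto
  have hcont: "continuous_on {0..T} h"
    unfolding h_def w_def by (intro continuous_intros cuT cvT)
  have dcont: "continuous_on {0..T} (\<lambda>t. dist (u t) (v t))"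
    by (intro continuous_intros cuT cvT)
  have deriv: "\<exists>y. DERIV h s :> y \<and> y \<le> 0"
    if s: "0 < s" "s \<le> T" "dist (u s) (v s) \<le> r" for s
  proof -
    have at: "at s within {0..} = at s"
      using s by (intro at_within_interior) auto
    have "((\<lambda>t. u t - v t) has_vector_derivative (F (u s) - F (v s))) (at s)"
      using du[of s] dv[of s] s at by (intro derivative_intros) auto
    from deriv_sq[OF this]
    have dw: "(w has_real_derivative 2 * ((u s - v s) \<bullet> (F (u s) - F (v s)))) (at s)"
      unfolding w_def .
    have dh: "(h has_real_derivative
        ((- (2*L)) * exp (- (2*L) * s) * w s + exp (- (2*L) * s) * (2 * ((u s - v s) \<bullet> (F (u s) - F (v s)))))) (at s)"
      unfolding h_def
      by (rule derivative_eq_intros dw refl | simp)+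
    have "(u s - v s) \<bullet> (F (u s) - F (v s)) \<le> norm (u s - v s) * norm (F (u s) - F (v s))"
      by (rule norm_cauchy_schwarz)
    also have "\<dots> = dist (u s) (v s) * dist (F (u s)) (F (v s))"
      by (simp add: dist_norm)
    also have "\<dots> \<le> dist (u s) (v s) * (L * dist (u s) (v s))"
      using lip[of s] s by (intro mult_left_mono) auto
    also have "\<dots> = L * w s" by (simp add: wd power2_eq_square)
    finally have "(- (2*L)) * exp (- (2*L) * s) * w s + exp (- (2*L) * s) * (2 * ((u s - v s) \<bullet> (F (u s) - F (v s)))) \<le> 0"
    proof -
      assume a: "(u s - v s) \<bullet> (F (u s) - F (v s)) \<le> L * w s"
      have "exp (- (2*L) * s) * (2 * ((u s - v s) \<bullet> (F (u s) - F (v s)))) \<le> exp (- (2*L) * s) * (2 * (L * w s))"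
        using a by (intro mult_left_mono) auto
      then show ?thesis by (simp add: algebra_simps)
    qed
    with dh show ?thesis by blast
  qed
  have mono: "h t \<le> h 0" if t: "0 \<le> t" "t \<le> T" "\<forall>s. 0 < s \<and> s < t \<longrightarrow> dist (u s) (v s) \<le> r" for t
  proof (rule DERIV_nonpos_imp_decreasing_open[OF t(1)])
    show "\<exists>y. DERIV h x :> y \<and> y \<le> 0" if "0 < x" "x < t" for x
      using deriv[of x] that t by auto
    show "continuous_on {0..t} h" using hcont by (rule continuous_on_subset) (use t in auto)
  qed
  have bound: "dist (u t) (v t) \<le> dist (u 0) (v 0) * exp (L * t)" if "h t \<le> h 0" for t
  proof -
    have h1: "exp (-(2*L)*t) * (dist (u t) (v t))\<^sup>2 \<le> (dist (u 0) (v 0))\<^sup>2"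
      using that by (simp add: h_def wd)
    have e1: "exp (2*L*t) * exp (-(2*L)*t) = 1"
      by (simp add: exp_add[symmetric])
    have e2: "exp (2*L*t) = (exp (L*t))\<^sup>2"
      by (simp add: power2_eq_square exp_add[symmetric])
    have "(dist (u t) (v t))\<^sup>2 = exp (2*L*t) * (exp (-(2*L)*t) * (dist (u t) (v t))\<^sup>2)"
      by (simp only: mult.assoc[symmetric] e1 mult_1)
    also have "\<dots> \<le> exp (2*L*t) * (dist (u 0) (v 0))\<^sup>2"
      using h1 by (intro mult_left_mono) auto
    also have "\<dots> = (dist (u 0) (v 0) * exp (L * t))\<^sup>2"
      by (subst e2) (simp add: power_mult_distrib ac_simps)
    finally show ?thesis by (rule power2_le_imp_le) auto
  qed
  have d0: "dist (u 0) (v 0) < r"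
  proof -
    have "dist (u 0) (v 0) \<le> dist (u 0) (v 0) * exp (L * T)"
      using L T by (intro mult_le_cancel_left1[THEN iffD2] disjI1 conjI) (auto simp: one_le_exp_iff)
    with small show ?thesis by linarith
  qed
  have A: "\<forall>t\<in>{0..T}. dist (u t) (v t) < r"
  proof (rule ccontr)
    assume neg: "\<not> ?thesis"
    define S where "S = {0..T} \<inter> (\<lambda>t. dist (u t) (v t)) -` {r..}"
    have Sne: "S \<noteq> {}" using neg by (auto simp: S_def not_less)
    have Scl: "closed S" unfolding S_def by (rule continuous_closed_preimage[OF dcont]) auto
    have Sbd: "bdd_below S" by (auto simp: S_def bdd_below_def)
    define t1 where "t1 = Inf S"
    have t1S: "t1 \<in> S" using closed_contains_Inf[OF Sne Sbd Scl] by (simp add: t1_def)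
    have below: "s \<notin> S" if "s < t1" for s
      using that cInf_lower[OF _ Sbd, of s] by (auto simp: t1_def)
    have t1r: "r \<le> dist (u t1) (v t1)" "0 \<le> t1" "t1 \<le> T" using t1S by (auto simp: S_def)
    have "\<forall>s. 0 < s \<and> s < t1 \<longrightarrow> dist (u s) (v s) \<le> r"
      using below t1r by (force simp: S_def)
    hence "h t1 \<le> h 0" using mono t1r by auto
    hence "dist (u t1) (v t1) \<le> dist (u 0) (v 0) * exp (L * t1)" by (rule bound)
    also have "\<dots> \<le> dist (u 0) (v 0) * exp (L * T)"
      using t1r L by (intro mult_left_mono) (auto simp: mult_left_mono)
    finally show False using small t1r by linarith
  qed
  show ?thesis
  proof
    fix t assume t: "t \<in> {0..T}"
    have "\<forall>s. 0 < s \<and> s < t \<longrightarrow> dist (u s) (v s) \<le> r" 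
    proof (intro allI impI)
      fix s assume "0 < s \<and> s < t"
      hence "s \<in> {0..T}" using t by auto
      thus "dist (u s) (v s) \<le> r" using A by (simp add: less_imp_le)
    qed
    hence "h t \<le> h 0" using mono[of t] t by auto
    thus "dist (u t) (v t) \<le> dist (u 0) (v 0) * exp (L * t)" by (rule bound)
  qed
qed

lemma unif_lip:
  fixes F :: "'a::euclidean_space \<Rightarrow> 'a"
  assumes LL: "\<And>x. x \<in> D \<Longrightarrow> \<exists>r>0. \<exists>L. L-lipschitz_on (cball x r \<inter> D) F"
    and K: "compact K" "K \<subseteq> D" "K \<noteq> {}"
  shows "\<exists>r>0. \<exists>L\<ge>0. \<forall>a\<in>K. \<forall>b\<in>D. dist a b \<le> r \<longrightarrow> dist (F a) (F b) \<le> L * dist a b"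
proof -
  from LL obtain R LL' where RL: "\<And>x. x \<in> D \<Longrightarrow> R x > 0 \<and> (LL' x)-lipschitz_on (cball x (R x) \<inter> D) F"
    by metis
  have cover: "K \<subseteq> (\<Union>x\<in>K. ball x (R x / 2))"
    using RL K(2) by force
  obtain C where C: "C \<subseteq> K" "finite C" "K \<subseteq> (\<Union>c\<in>C. ball c (R c / 2))"
    using compactE_image[OF K(1) _ cover] by blast
  have Cne: "C \<noteq> {}" using C K(3) by auto
  define r0 where "r0 = Min ((\<lambda>c. R c / 2) ` C)"
  define L0 where "L0 = Max (LL' ` C)"
  have r0: "r0 > 0" unfolding r0_def using C Cne RL K(2) by (subst Min_gr_iff) auto
  have L0: "L0 \<ge> 0"
  proof -
    obtain c where c: "c \<in> C" using Cne by auto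
    have "LL' c \<ge> 0" using RL[of c] c C K(2) lipschitz_on_nonneg by blast
    also have "LL' c \<le> L0" unfolding L0_def using C c by (intro Max_ge) auto
    finally show ?thesis .
  qed
  have "\<forall>a\<in>K. \<forall>b\<in>D. dist a b \<le> r0 \<longrightarrow> dist (F a) (F b) \<le> L0 * dist a b"
  proof (intro ballI impI)
    fix a b assume a: "a \<in> K" and b: "b \<in> D" and ab: "dist a b \<le> r0"
    obtain c where c: "c \<in> C" "a \<in> ball c (R c / 2)" using C(3) a by auto
    have cD: "c \<in> D" using c C K(2) by auto
    have "r0 \<le> R c / 2" unfolding r0_def using C c by (intro Min_le) auto
    hence "a \<in> cball c (R c) \<inter> D" "b \<in> cball c (R c) \<inter> D"
      using c ab a b K(2) dist_triangle[of c b a] RL[OF cD] by (auto simp: dist_commute)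
    hence "dist (F a) (F b) \<le> LL' c * dist a b"
      using RL[OF cD] by (intro lipschitz_onD) auto
    also have "\<dots> \<le> L0 * dist a b"
      unfolding L0_def using C c by (intro mult_right_mono Max_ge) auto
    finally show "dist (F a) (F b) \<le> L0 * dist a b" .
  qed
  thus ?thesis using r0 L0 by blast
qed

lemma cont_dep:
  fixes F :: "'a::euclidean_space \<Rightarrow> 'a"
  assumes LL: "\<And>x. x \<in> D \<Longrightarrow> \<exists>r>0. \<exists>L. L-lipschitz_on (cball x r \<inter> D) F"
    and du: "\<And>t. t \<ge> 0 \<Longrightarrow> (u has_vector_derivative F (u t)) (at t within {0..})"
    and uD: "\<And>t. t \<ge> 0 \<Longrightarrow> u t \<in> D"
    and T: "0 \<le> T" and e: "0 < e"
  shows "\<exists>\<delta>>0. \<forall>v. (\<forall>t\<ge>0. (v has_vector_derivative F (v t)) (at t within {0..})) \<and>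
            (\<forall>t\<ge>0. v t \<in> D) \<and> dist (u 0) (v 0) < \<delta> \<longrightarrow> (\<forall>t\<in>{0..T}. dist (u t) (v t) < e)"
proof -
  have cu0: "continuous_on {0..} u"
    unfolding continuous_on_eq_continuous_within
    using du by (auto intro: has_vector_derivative_continuous)
  have cu: "continuous_on {0..T} u" using cu0 by (rule continuous_on_subset) auto
  have K: "compact (u ` {0..T})" "u ` {0..T} \<subseteq> D" "u ` {0..T} \<noteq> {}"
    using compact_continuous_image[OF cu] uD T by auto
  obtain r L where rL: "r > 0" "L \<ge> 0"
    "\<forall>a\<in>u ` {0..T}. \<forall>b\<in>D. dist a b \<le> r \<longrightarrow> dist (F a) (F b) \<le> L * dist a b"
    using unif_lip[OF LL K] by blast
  define \<delta> where "\<delta> = min r e / (2 * exp (L * T))"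
  have dpos: "\<delta> > 0" using rL e by (simp add: \<delta>_def)
  have "\<forall>t\<in>{0..T}. dist (u t) (v t) < e"
    if dv: "\<forall>t\<ge>0. (v has_vector_derivative F (v t)) (at t within {0..})"
      and vD: "\<forall>t\<ge>0. v t \<in> D" and d0: "dist (u 0) (v 0) < \<delta>" for v
  proof -
    have key: "dist (u 0) (v 0) * exp (L * T) < min r e / 2"
    proof -
      have "dist (u 0) (v 0) * exp (L * T) < \<delta> * exp (L * T)"
        using d0 by (intro mult_strict_right_mono) auto
      also have "\<dots> = min r e / 2" by (simp add: \<delta>_def)
      finally show ?thesis .
    qed
    have G: "\<forall>t\<in>{0..T}. dist (u t) (v t) \<le> dist (u 0) (v 0) * exp (L * t)"
    proof (rule gronwall_like[where F=F and r=r and L=L])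
      show "\<And>t. t \<ge> 0 \<Longrightarrow> (u has_vector_derivative F (u t)) (at t within {0..})" by (rule du)
      show "\<And>t. t \<ge> 0 \<Longrightarrow> (v has_vector_derivative F (v t)) (at t within {0..})" using dv by auto
      show "dist (F (u t)) (F (v t)) \<le> L * dist (u t) (v t)"
        if "0 \<le> t" "t \<le> T" "dist (u t) (v t) \<le> r" for t
        using rL(3) that vD by auto
      show "0 \<le> L" "0 \<le> T" by (fact rL(2)) (fact T)
      show "dist (u 0) (v 0) * exp (L * T) < r" using key rL e by linarith
    qed
    show ?thesis
    proof
      fix t assume t: "t \<in> {0..T}"
      have "dist (u t) (v t) \<le> dist (u 0) (v 0) * exp (L * t)" using G t by auto
      also have "\<dots> \<le> dist (u 0) (v 0) * exp (L * T)"
        using t rL(2) by (intro mult_left_mono) (auto simp: mult_left_mono)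
      finally show "dist (u t) (v t) < e" using key e by linarith
    qed
  qed
  thus ?thesis using dpos by blast
qed

theorem mainTheorem4:
  fixes f :: "real^'n \<Rightarrow> real^'m \<Rightarrow> real^'n"
    and phi :: "real \<Rightarrow> real^'n \<Rightarrow> real^'m \<Rightarrow> real^'n"
    and D :: "(real^'n) set" and P :: "(real^'m) set"
    and xs xb :: "real^'m \<Rightarrow> real^'n"
    and pmin pmax :: "real^'m"
  assumes cont: "continuous_on (D \<times> P) (\<lambda>(x, p). f x p)"
    and lip: "local_lipschitz P D (\<lambda>p x. f x p)"
    and flow: "is_flow f phi D P"
    and A1_bistable: "\<forall>p\<in>P. bistable f phi D p (xs p) (xb p)"
    and A1_monotone: "monotone_system phi D P"
    and A2_compact: "compact P"
    and A2_min: "pmin \<in> P" and A2_max: "pmax \<in> P"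
    and A2_bounds: "\<forall>p\<in>P. pmin \<le> p \<and> p \<le> pmax"
    and A3: "\<forall>p\<in>P. xs p \<in> (\<Inter>q\<in>P. basin phi D q (xs q)) \<and>
                   xb p \<in> (\<Inter>q\<in>P. basin phi D q (xb q))"
    and A4: "strongly_less (xs pmax) (xb pmin)"
  shows "(\<forall>p1\<in>P. \<forall>p2\<in>P. p2 \<le> p1 \<longrightarrow>
            basin phi D p1 (xs p1) \<subseteq> basin phi D p2 (xs p2) \<and>
            basin phi D p2 (xb p2) \<subseteq> basin phi D p1 (xb p1)) \<and>
         (\<forall>p\<in>P.
            basin phi D pmax (xs pmax) \<subseteq> basin phi D p (xs p) \<and>
            basin phi D p (xs p) \<subseteq> basin phi D pmin (xs pmin) \<and>
            basin phi D pmin (xb pmin) \<subseteq> basin phi D p (xb p) \<and>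
            basin phi D p (xb p) \<subseteq> basin phi D pmax (xb pmax))"
  proof -
  have flow': "\<forall>x0\<in>D. \<forall>p\<in>P. phi 0 x0 p = x0 \<and>
        (\<forall>t\<ge>0. ((\<lambda>s. phi s x0 p) has_vector_derivative f (phi t x0 p) p) (at t within {0..}))"
    using flow unfolding is_flow_def .
  have phi0: "phi 0 x p = x" if "x \<in> D" "p \<in> P" for x p
    using flow' that by simp
  have der: "((\<lambda>s. phi s x p) has_vector_derivative f (phi t x p) p) (at t within {0..})"
    if "x \<in> D" "p \<in> P" "t \<ge> 0" for x p t
    using flow' that by simp
  have fi: "phi t x p \<in> D" if "p \<in> P" "x \<in> D" "t \<ge> 0" for p x t
  proof -
    have "bistable f phi D p (xs p) (xb p)" using A1_bistable that(1) by simp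
    hence "forward_invariant phi D p" unfolding bistable_def by (rule conjunct1)
    thus ?thesis using that unfolding forward_invariant_def by simp
  qed
  have LLp: "\<exists>r>0. \<exists>L. L-lipschitz_on (cball x r \<inter> D) (\<lambda>x. f x p)" if "p \<in> P" "x \<in> D" for p x
  proof -
    have "\<exists>u>0. \<exists>L. \<forall>t\<in>cball p u \<inter> P. L-lipschitz_on (cball x u \<inter> D) (\<lambda>x. f x t)"
      using lip that unfolding local_lipschitz_def by simp
    then obtain u L where "u > 0" "\<forall>t\<in>cball p u \<inter> P. L-lipschitz_on (cball x u \<inter> D) (\<lambda>x. f x t)"
      by blast
    moreover have "p \<in> cball p u \<inter> P" using that \<open>u > 0\<close> by simp
    ultimately show ?thesis by blast
  qed
  have semi: "phi (s + T) y p = phi s (phi T y p) p"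
    if p: "p \<in> P" and y: "y \<in> D" and T: "T \<ge> 0" and s: "s \<ge> 0" for p y T s
  proof -
    define u where "u = (\<lambda>s. phi (s + T) y p)"
    define v where "v = (\<lambda>s. phi s (phi T y p) p)"
    have yT: "phi T y p \<in> D" using fi p y T by auto
    have du: "(u has_vector_derivative f (u t) p) (at t within {0..})" if "t \<ge> 0" for t
    proof -
      have "((\<lambda>s. s + T) has_vector_derivative 1) (at t within {0..})"
        by (auto intro!: derivative_eq_intros)
      moreover have "((\<lambda>s. phi s y p) has_vector_derivative f (phi (t + T) y p) p)
          (at ((\<lambda>s. s + T) t) within (\<lambda>s. s + T) ` {0..})"
        using der[OF y p, of "t + T"] that T
        by (auto intro: has_vector_derivative_within_subset)
      ultimately have "(((\<lambda>s. phi s y p) \<circ> (\<lambda>s. s + T)) has_vector_derivative 1 *\<^sub>R f (phi (t + T) y p) p) (at t within {0..})"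
        by (rule vector_diff_chain_within)
      thus ?thesis by (simp add: u_def o_def)
    qed
    have uD: "u t \<in> D" if "t \<ge> 0" for t using fi p y T that by (simp add: u_def)
    have dv: "\<forall>t\<ge>0. (v has_vector_derivative f (v t) p) (at t within {0..})"
      using der[OF yT p] by (simp add: v_def)
    have vD: "\<forall>t\<ge>0. v t \<in> D" using fi p yT by (simp add: v_def)
    have u0: "u 0 = v 0" using phi0[OF yT p] by (simp add: u_def v_def)
    have "dist (u s) (v s) < e" if e: "e > 0" for e
    proof -
      obtain \<delta> where "\<delta> > 0" and H: "\<forall>v. (\<forall>t\<ge>0. (v has_vector_derivative f (v t) p) (at t within {0..})) \<and>
            (\<forall>t\<ge>0. v t \<in> D) \<and> dist (u 0) (v 0) < \<delta> \<longrightarrow> (\<forall>t\<in>{0..s}. dist (u t) (v t) < e)"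
        using cont_dep[where F="\<lambda>x. f x p" and D=D and u=u and T=s and e=e, OF LLp[OF p] du uD s e]
        by blast
      thus ?thesis using dv vD u0 s by auto
    qed
    hence "u s = v s" by (metis dist_eq_0_iff dist_nz less_irrefl)
    thus ?thesis by (simp add: u_def v_def)
  qed
  have opn: "\<exists>r>0. \<forall>y\<in>D. dist x0 y < r \<longrightarrow> y \<in> basin phi D p e"
    if p: "p \<in> P" and st: "asymp_stable f phi D p e" and x0: "x0 \<in> basin phi D p e" for p e x0
  proof -
    obtain d where d: "d > 0" "\<forall>z\<in>D. dist z e < d \<longrightarrow> ((\<lambda>t. phi t z p) \<longlongrightarrow> e) at_top"
      using st unfolding asymp_stable_def by blast
    have x0D: "x0 \<in> D" and lim: "((\<lambda>t. phi t x0 p) \<longlongrightarrow> e) at_top"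
      using x0 by (auto simp: basin_def)
    have "eventually (\<lambda>t. dist (phi t x0 p) e < d/2) at_top"
      using lim d(1) unfolding tendsto_iff by (metis half_gt_zero)
    then obtain N where N: "\<And>t. t \<ge> N \<Longrightarrow> dist (phi t x0 p) e < d/2"
      by (auto simp: eventually_at_top_linorder)
    define T where "T = max N 0"
    have T: "T \<ge> 0" "dist (phi T x0 p) e < d/2" using N by (auto simp: T_def)
    obtain \<delta> where \<delta>: "\<delta> > 0" and H: "\<forall>v. (\<forall>t\<ge>0. (v has_vector_derivative f (v t) p) (at t within {0..})) \<and>
            (\<forall>t\<ge>0. v t \<in> D) \<and> dist (phi 0 x0 p) (v 0) < \<delta> \<longrightarrow> (\<forall>t\<in>{0..T}. dist (phi t x0 p) (v t) < d/2)"
      using cont_dep[where F="\<lambda>x. f x p" and D=D and u="\<lambda>t. phi t x0 p" and T=T and e="d/2",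
          OF LLp[OF p] der[OF x0D p] fi[OF p x0D] T(1)] d(1)
      by auto
    have "y \<in> basin phi D p e" if y: "y \<in> D" "dist x0 y < \<delta>" for y
    proof -
      have "dist (phi T x0 p) (phi T y p) < d/2"
        using H[rule_format, of "\<lambda>t. phi t y p"] der[OF y(1) p] fi[OF p y(1)] phi0[OF x0D p] phi0[OF y(1) p] y T(1)
        by auto
      hence close: "dist (phi T y p) e < d" using T(2) dist_triangle[of "phi T y p" e "phi T x0 p"]
        by (simp add: dist_commute)
      have yT: "phi T y p \<in> D" using fi p y T by auto
      have g: "((\<lambda>s. phi s (phi T y p) p) \<longlongrightarrow> e) at_top" using d(2) yT close by auto
      have sh: "filterlim (\<lambda>t. (- T) + t) at_top at_top"
        by (rule filterlim_tendsto_add_at_top[OF tendsto_const filterlim_ident])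
      have "((\<lambda>t. phi ((- T) + t) (phi T y p) p) \<longlongrightarrow> e) at_top"
        using filterlim_compose[OF g sh] by (simp add: o_def)
      moreover have "eventually (\<lambda>t. phi ((- T) + t) (phi T y p) p = phi t y p) at_top"
        unfolding eventually_at_top_linorder
      proof (rule exI[of _ T], intro allI impI)
        fix n assume "T \<le> n"
        hence "phi ((n - T) + T) y p = phi (n - T) (phi T y p) p" using semi[OF p y(1) T(1), of "n - T"] by simp
        thus "phi ((- T) + n) (phi T y p) p = phi n y p" by simp
      qed
      ultimately have "((\<lambda>t. phi t y p) \<longlongrightarrow> e) at_top" by (rule Lim_transform_eventually)
      thus ?thesis using y by (simp add: basin_def)
    qed
    thus ?thesis using \<delta> by blast
  qed
  have lelem: "a \<le> b"
    if "p \<in> P" "q \<in> P" "p \<le> q" "y \<in> basin phi D p a" "y \<in> basin phi D q b" for p q y a b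
  proof -
    have yD: "y \<in> D" and la: "((\<lambda>t. phi t y p) \<longlongrightarrow> a) at_top" and lb: "((\<lambda>t. phi t y q) \<longlongrightarrow> b) at_top"
      using that by (auto simp: basin_def)
    have mon: "phi t y p \<le> phi t y q" if "t \<ge> 0" for t
      using A1_monotone \<open>p \<in> P\<close> \<open>q \<in> P\<close> \<open>p \<le> q\<close> yD that unfolding monotone_system_def by blast
    show ?thesis unfolding less_eq_vec_def
    proof
      fix i
      have la': "((\<lambda>t. phi t y p $ i) \<longlongrightarrow> a $ i) at_top" using la by (rule tendsto_vec_nth)
      have lb': "((\<lambda>t. phi t y q $ i) \<longlongrightarrow> b $ i) at_top" using lb by (rule tendsto_vec_nth)
      have ev: "eventually (\<lambda>t. phi t y p $ i \<le> phi t y q $ i) at_top"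
        unfolding eventually_at_top_linorder using mon by (auto simp: less_eq_vec_def)
      show "a $ i \<le> b $ i" by (rule tendsto_le[OF _ lb' la' ev]) simp
    qed
  qed
  have A3s: "xs p \<in> basin phi D q (xs q)" if "p \<in> P" "q \<in> P" for p q using A3 that by blast
  have A3b: "xb p \<in> basin phi D q (xb q)" if "p \<in> P" "q \<in> P" for p q using A3 that by blast
  have contra: False
    if p: "p1 \<in> P" "p2 \<in> P" "p2 \<le> p1" and y: "y \<in> basin phi D p2 (xb p2)" "y \<in> basin phi D p1 (xs p1)" for p1 p2 y
  proof -
    have "xb p2 \<le> xs p1" by (rule lelem[OF p(2) p(1) p(3) y])
    moreover have "xs p1 \<le> xs pmax"
      by (rule lelem[OF p(1) A2_max _ A3s[OF p(1) p(1)] A3s[OF p(1) A2_max]]) (use A2_bounds p in auto)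
    moreover have "xb pmin \<le> xb p2"
      by (rule lelem[OF A2_min p(2) _ A3b[OF p(2) A2_min] A3b[OF p(2) p(2)]]) (use A2_bounds p in auto)
    ultimately have "xb pmin \<le> xs pmax" by (meson order_trans)
    hence "xb pmin $ undefined \<le> xs pmax $ undefined" by (simp add: less_eq_vec_def)
    moreover have "xs pmax $ undefined < xb pmin $ undefined" using A4 by (simp add: strongly_less_def)
    ultimately show False by linarith
  qed
  have bsE: "{xe \<in> D. asymp_stable f phi D p xe} = {xs p, xb p}"
     "\<forall>x0\<in>D. x0 \<notin> basin phi D p (xs p) \<and> x0 \<notin> basin phi D p (xb p) \<longrightarrow>
        x0 \<in> frontier (basin phi D p (xs p)) \<inter> frontier (basin phi D p (xb p))"
    if "p \<in> P" for p
  proof -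
    have b: "bistable f phi D p (xs p) (xb p)" using A1_bistable that by blast
    from b show "{xe \<in> D. asymp_stable f phi D p xe} = {xs p, xb p}"
      unfolding bistable_def by (elim conjE) assumption
    from b show "\<forall>x0\<in>D. x0 \<notin> basin phi D p (xs p) \<and> x0 \<notin> basin phi D p (xb p) \<longrightarrow>
        x0 \<in> frontier (basin phi D p (xs p)) \<inter> frontier (basin phi D p (xb p))"
      unfolding bistable_def by (elim conjE) assumption
  qed
  have stab: "asymp_stable f phi D p (xs p)" "asymp_stable f phi D p (xb p)" if "p \<in> P" for p
  proof -
    have "xs p \<in> {xe \<in> D. asymp_stable f phi D p xe}" "xb p \<in> {xe \<in> D. asymp_stable f phi D p xe}"
      unfolding bsE(1)[OF that] by simp_all
    thus "asymp_stable f phi D p (xs p)" "asymp_stable f phi D p (xb p)" by simp_all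
  qed
  have neither: "x0 \<in> closure (basin phi D p (xs p)) \<and> x0 \<in> closure (basin phi D p (xb p))"
    if "p \<in> P" "x0 \<in> D" "x0 \<notin> basin phi D p (xs p)" "x0 \<notin> basin phi D p (xb p)" for p x0
  proof -
    have "x0 \<in> frontier (basin phi D p (xs p)) \<inter> frontier (basin phi D p (xb p))"
      using bsE(2)[OF that(1)] that(2-4) by blast
    thus ?thesis by (simp add: frontier_def)
  qed
  have part1: "basin phi D p1 (xs p1) \<subseteq> basin phi D p2 (xs p2) \<and>
            basin phi D p2 (xb p2) \<subseteq> basin phi D p1 (xb p1)"
    if p: "p1 \<in> P" "p2 \<in> P" "p2 \<le> p1" for p1 p2
  proof
    show "basin phi D p1 (xs p1) \<subseteq> basin phi D p2 (xs p2)"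
    proof
      fix x0 assume x0: "x0 \<in> basin phi D p1 (xs p1)"
      hence x0D: "x0 \<in> D" by (simp add: basin_def)
      show "x0 \<in> basin phi D p2 (xs p2)"
      proof (rule ccontr)
        assume n1: "x0 \<notin> basin phi D p2 (xs p2)"
        show False
        proof (cases "x0 \<in> basin phi D p2 (xb p2)")
          case True thus False using contra[OF p True x0] by blast
        next
          case False
          hence cl: "x0 \<in> closure (basin phi D p2 (xb p2))" using neither[OF p(2) x0D n1] by blast
          obtain r where r: "r > 0" "\<forall>y\<in>D. dist x0 y < r \<longrightarrow> y \<in> basin phi D p1 (xs p1)"
            using opn[OF p(1) stab(1)[OF p(1)] x0] by blast
          obtain y where y: "y \<in> basin phi D p2 (xb p2)" "dist y x0 < r"
            using cl r(1) unfolding closure_approachable by blast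
          have "y \<in> D" using y by (simp add: basin_def)
          hence "y \<in> basin phi D p1 (xs p1)" using r y by (simp add: dist_commute)
          thus False using contra[OF p y(1)] by blast
        qed
      qed
    qed
    show "basin phi D p2 (xb p2) \<subseteq> basin phi D p1 (xb p1)"
    proof
      fix x0 assume x0: "x0 \<in> basin phi D p2 (xb p2)"
      hence x0D: "x0 \<in> D" by (simp add: basin_def)
      show "x0 \<in> basin phi D p1 (xb p1)"
      proof (rule ccontr)
        assume n1: "x0 \<notin> basin phi D p1 (xb p1)"
        show False
        proof (cases "x0 \<in> basin phi D p1 (xs p1)")
          case True thus False using contra[OF p x0 True] by blast
        next
          case False
          hence cl: "x0 \<in> closure (basin phi D p1 (xs p1))" using neither[OF p(1) x0D _ n1] by blast
          obtain r where r: "r > 0" "\<forall>y\<in>D. dist x0 y < r \<longrightarrow> y \<in> basin phi D p2 (xb p2)"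
            using opn[OF p(2) stab(2)[OF p(2)] x0] by blast
          obtain y where y: "y \<in> basin phi D p1 (xs p1)" "dist y x0 < r"
            using cl r(1) unfolding closure_approachable by blast
          have "y \<in> D" using y by (simp add: basin_def)
          hence yb: "y \<in> basin phi D p2 (xb p2)" using r y by (simp add: dist_commute)
          show False using contra[OF p yb y(1)] by blast
        qed
      qed
    qed
  qed
  show ?thesis
  proof (intro conjI ballI impI)
    fix p1 p2 assume "p1 \<in> P" "p2 \<in> P" "p2 \<le> p1"
    thus "basin phi D p1 (xs p1) \<subseteq> basin phi D p2 (xs p2)"
         "basin phi D p2 (xb p2) \<subseteq> basin phi D p1 (xb p1)" using part1 by auto
  next
    fix p assume p: "p \<in> P"
    have a: "pmin \<le> p" "p \<le> pmax" using A2_bounds p by auto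
    show "basin phi D pmax (xs pmax) \<subseteq> basin phi D p (xs p)" using part1[OF A2_max p a(2)] by blast
    show "basin phi D p (xs p) \<subseteq> basin phi D pmin (xs pmin)" using part1[OF p A2_min a(1)] by blast
    show "basin phi D pmin (xb pmin) \<subseteq> basin phi D p (xb p)" using part1[OF p A2_min a(1)] by blast
    show "basin phi D p (xb p) \<subseteq> basin phi D pmax (xb pmax)" using part1[OF A2_max p a(2)] by blast
  qed
qed

end
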